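(* Let $X_1, X_2, \ldots$ be independent random variables, each uniformly distributed on $[-1,1]$, and fix $\varepsilon > 0$. For $t \ge 0$ and $z \in \mathbb{R}$, let $f_t(z) = 1$ if there exists $S \subseteq \{1,\dots,t\}$ with $\lvert z - \sum_{i \in S} X_i \rvert < \varepsilon$, and $f_t(z) = 0$ otherwise; let $v_t = \frac{1}{2}\int_{-1}^{1} f_t(z)\,\mathrm{d}z$, let $\tau_1 = \min\{t \ge 0 : v_t > 1/2\}$, for $t \ge 0$ let $w_t = 1 - v_{\tau_1 + t}$, and let $\tau_2 = \min\{t \ge 0 : w_t \le \varepsilon/2\}$. Then for all $t > 0$, $$\Pr[\tau_2 \le t] \ge 1 - \frac{1}{\varepsilon}\left(\frac{7}{8}\right)^t.$$
   Context: $f_t$ is the indicator that $z$ can be approximated to within error strictly less than $\varepsilon$ by a subset sum of the first $t$ variables (the empty sum being $0$); $v_t$ is the fraction of $[-1,1]$ so approximated; $\tau_1$ is the first time this fraction exceeds $1/2$; $w_t$ is the non-approximated fraction $t$ steps after $\tau_1$; $\tau_2$ is the number of steps after $\tau_1$ until the non-approximated fraction is at most $\varepsilon/2$. *)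

theory Defs
  imports "HOL-Probability.Probability"
begin

definition approx_by :: "real \<Rightarrow> (nat \<Rightarrow> 'a \<Rightarrow> real) \<Rightarrow> nat \<Rightarrow> real \<Rightarrow> 'a \<Rightarrow> bool" where
  "approx_by eps X t z \<omega> \<longleftrightarrow> (\<exists>S \<subseteq> {1..t}. \<bar>z - (\<Sum>i\<in>S. X i \<omega>)\<bar> < eps)"

definition vfrac :: "real \<Rightarrow> (nat \<Rightarrow> 'a \<Rightarrow> real) \<Rightarrow> nat \<Rightarrow> 'a \<Rightarrow> real" where
  "vfrac eps X t \<omega> = (1/2) * (LBINT z=-1..1. (if approx_by eps X t z \<omega> then 1 else 0))"

definition tau1 :: "real \<Rightarrow> (nat \<Rightarrow> 'a \<Rightarrow> real) \<Rightarrow> 'a \<Rightarrow> enat" where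
  "tau1 eps X \<omega> = (if \<exists>t. vfrac eps X t \<omega> > 1/2
      then enat (LEAST t. vfrac eps X t \<omega> > 1/2) else \<infinity>)"

text \<open>w_t = 1 - v_{tau_1 + t} (only meaningful when tau_1 is finite).\<close>
definition wfrac :: "real \<Rightarrow> (nat \<Rightarrow> 'a \<Rightarrow> real) \<Rightarrow> nat \<Rightarrow> 'a \<Rightarrow> real" where
  "wfrac eps X t \<omega> = 1 - vfrac eps X (the_enat (tau1 eps X \<omega>) + t) \<omega>"

definition tau2 :: "real \<Rightarrow> (nat \<Rightarrow> 'a \<Rightarrow> real) \<Rightarrow> 'a \<Rightarrow> enat" where
  "tau2 eps X \<omega> = (if tau1 eps X \<omega> \<noteq> \<infinity> \<and> (\<exists>t. wfrac eps X t \<omega> \<le> eps/2)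
      then enat (LEAST t. wfrac eps X t \<omega> \<le> eps/2) else \<infinity>)"

end

theory Submission
  imports Defs
begin





 

definition AS :: "real \<Rightarrow> (nat \<Rightarrow> real) \<Rightarrow> nat \<Rightarrow> real set" where
  "AS eps y n = {z. \<exists>S\<subseteq>{1..n}. \<bar>z - (\<Sum>i\<in>S. y i)\<bar> < eps}"

lemma AS_cong: "(\<And>i. i \<in> {1..n} \<Longrightarrow> y i = y' i) \<Longrightarrow> AS eps y n = AS eps y' n"
proof -
  assume h: "\<And>i. i \<in> {1..n} \<Longrightarrow> y i = y' i"
  have "(\<Sum>i\<in>S. y i) = (\<Sum>i\<in>S. y' i)" if "S \<subseteq> {1..n}" for S
    using that h by (intro sum.cong) auto
  then have "\<And>z. (\<exists>S\<subseteq>{1..n}. \<bar>z - (\<Sum>i\<in>S. y i)\<bar> < eps) = (\<exists>S\<subseteq>{1..n}. \<bar>z - (\<Sum>i\<in>S. y' i)\<bar> < eps)"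
    by (metis (no_types, lifting))
  then show ?thesis unfolding AS_def by simp
qed

lemma AS_mono: "n \<le> m \<Longrightarrow> AS eps y n \<subseteq> AS eps y m"
proof
  fix z assume "n \<le> m" "z \<in> AS eps y n"
  then obtain S where "S \<subseteq> {1..n}" "\<bar>z - (\<Sum>i\<in>S. y i)\<bar> < eps" unfolding AS_def by blast
  moreover have "{1..n} \<subseteq> {1..m}" using \<open>n \<le> m\<close> by auto
  ultimately show "z \<in> AS eps y m" unfolding AS_def by blast
qed

lemma AS_zero: "{-eps<..<eps} \<subseteq> AS eps y n"
  unfolding AS_def by (auto intro!: exI[of _ "{}"])

lemma AS_Suc: "z \<in> AS eps y (Suc n) \<longleftrightarrow> z \<in> AS eps y n \<or> z - y (Suc n) \<in> AS eps y n"
proof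
  assume "z \<in> AS eps y (Suc n)"
  then obtain S where S: "S \<subseteq> {1..Suc n}" "\<bar>z - (\<Sum>i\<in>S. y i)\<bar> < eps" unfolding AS_def by auto
  show "z \<in> AS eps y n \<or> z - y (Suc n) \<in> AS eps y n"
  proof (cases "Suc n \<in> S")
    case True
    have fin: "finite S" using S(1) finite_subset by blast
    have "(\<Sum>i\<in>S. y i) = y (Suc n) + (\<Sum>i\<in>S - {Suc n}. y i)"
      using True fin by (simp add: sum.remove)
    moreover have "S - {Suc n} \<subseteq> {1..n}" using S(1) by auto
    ultimately show ?thesis using S(2) unfolding AS_def
      by (intro disjI2, auto intro!: exI[of _ "S - {Suc n}"])
  next
    case False
    then have "S \<subseteq> {1..n}" using S(1) by (auto simp: le_Suc_eq)
    then show ?thesis using S(2) unfolding AS_def by auto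
  qed
next
  assume "z \<in> AS eps y n \<or> z - y (Suc n) \<in> AS eps y n"
  then show "z \<in> AS eps y (Suc n)"
  proof
    assume "z \<in> AS eps y n"
    then show ?thesis using AS_mono[of n "Suc n"] by auto
  next
    assume "z - y (Suc n) \<in> AS eps y n"
    then obtain S where S: "S \<subseteq> {1..n}" "\<bar>z - y (Suc n) - (\<Sum>i\<in>S. y i)\<bar> < eps" unfolding AS_def by auto
    have fin: "finite S" using S(1) finite_subset by blast
    have nS: "Suc n \<notin> S" using S(1) by auto
    have "(\<Sum>i\<in>insert (Suc n) S. y i) = y (Suc n) + (\<Sum>i\<in>S. y i)" using fin nS by simp
    then show ?thesis using S unfolding AS_def
      by (auto intro!: exI[of _ "insert (Suc n) S"] simp: algebra_simps)
  qed
qed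

lemma AS_eq_UN: "AS eps y n = (\<Union>S\<in>Pow {1..n}. {z. \<bar>z - (\<Sum>i\<in>S. y i)\<bar> < eps})"
  unfolding AS_def by auto

lemma AS_open: "open (AS eps y n)"
  unfolding AS_eq_UN
  by (intro open_UN ballI open_Collect_less continuous_intros)

lemma AS_borel[measurable]: "AS eps y n \<in> sets borel"
  using AS_open by auto

lemma AS_pred:
  assumes "m \<le> n"
  shows "Measurable.pred (PiM {1..n} (\<lambda>_. borel) \<Otimes>\<^sub>M borel) (\<lambda>p. snd p \<in> AS eps (fst p) m)"
proof -
  have "\<And>S. S \<in> Pow {1..m} \<Longrightarrow> Measurable.pred (PiM {1..n} (\<lambda>_. borel) \<Otimes>\<^sub>M borel)
          (\<lambda>p. \<bar>snd p - (\<Sum>i\<in>S. fst p i)\<bar> < eps)"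
  proof -
    fix S assume S: "S \<in> Pow {1..m}"
    have "(\<lambda>p. fst p i) \<in> borel_measurable (PiM {1..n} (\<lambda>_. borel) \<Otimes>\<^sub>M borel)" if "i \<in> S" for i
      using that S assms by (intro measurable_compose[OF measurable_fst measurable_component_singleton]) auto
    then show "?thesis S" by measurable
  qed
  then have "Measurable.pred (PiM {1..n} (\<lambda>_. borel) \<Otimes>\<^sub>M borel)
          (\<lambda>p. \<exists>S\<in>Pow {1..m}. \<bar>snd p - (\<Sum>i\<in>S. fst p i)\<bar> < eps)"
    by (intro pred_intros_finite) auto
  then show ?thesis unfolding AS_def by (simp add: Bex_def)
qed


definition uf :: "real \<Rightarrow> (nat \<Rightarrow> real) \<Rightarrow> nat \<Rightarrow> real" where
  "uf eps y n = measure lborel ({-1<..<1} - AS eps y n) / 2"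

lemma approx_by_AS: "approx_by eps X t z \<omega> \<longleftrightarrow> z \<in> AS eps (\<lambda>i. X i \<omega>) t"
  unfolding approx_by_def AS_def by simp

lemma emeasure_I: "emeasure lborel {-1<..<(1::real)} = 2"
  by simp

lemma einterval_m11: "einterval (-1) 1 = {-1<..<1::real}"
proof -
  have "(-1::ereal) = ereal (-1)" by (simp add: one_ereal_def)
  then show ?thesis using einterval_eq_Icc[of "-1" 1] by (simp add: one_ereal_def)
qed

lemma vfrac_uf: "vfrac eps X n \<omega> = 1 - uf eps (\<lambda>i. X i \<omega>) n"
proof -
  let ?A = "AS eps (\<lambda>i. X i \<omega>) n"
  have fin: "emeasure lborel ({-1<..<1} \<inter> ?A) \<noteq> \<infinity>"
  proof -
    have "emeasure lborel ({-1<..<1} \<inter> ?A) \<le> emeasure lborel {-1<..<1::real}"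
      by (intro emeasure_mono) auto
    then show ?thesis by (auto simp: top_unique)
  qed
  have "(LBINT z=-1..1. (if approx_by eps X n z \<omega> then 1 else 0)) =
        (LINT z:{-1<..<1}|lborel. (if z \<in> ?A then 1 else 0))"
    unfolding interval_lebesgue_integral_def approx_by_AS einterval_m11
    by (simp add: one_ereal_def)
  also have "\<dots> = (\<integral>z. indicator ({-1<..<1} \<inter> ?A) z \<partial>lborel)"
    unfolding set_lebesgue_integral_def by (intro Bochner_Integration.integral_cong) (auto simp: indicator_def)
  also have "\<dots> = measure lborel ({-1<..<1} \<inter> ?A)"
    by simp
  finally have 1: "(LBINT z=-1..1. (if approx_by eps X n z \<omega> then 1 else 0)) = measure lborel ({-1<..<1} \<inter> ?A)" .
  have eq: "{-1<..<1} - ?A = {-1<..<1} - ({-1<..<1} \<inter> ?A)" by auto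
  have "measure lborel ({-1<..<1} - ?A) = measure lborel ({-1<..<1::real}) - measure lborel ({-1<..<1} \<inter> ?A)"
    unfolding eq by (rule measure_Diff) (auto simp: fmeasurable_def)
  then have 2: "measure lborel ({-1<..<1} - ?A) = 2 - measure lborel ({-1<..<1} \<inter> ?A)" by simp
  show ?thesis unfolding vfrac_def uf_def 1 using 2 by (simp add: field_simps)
qed

lemma I_fmeas[simp]: "{-1<..<1::real} \<in> fmeasurable lborel"
  by (simp add: fmeasurable_def)

lemma IA_fmeas[simp]: "{-1<..<1::real} - AS eps y n \<in> fmeasurable lborel"
  by (intro fmeasurable_Diff) auto

lemma uf_nonneg: "0 \<le> uf eps y n" unfolding uf_def by simp

lemma uf_le1: "uf eps y n \<le> 1"
proof -
  have "measure lborel ({-1<..<1} - AS eps y n) \<le> measure lborel {-1<..<1::real}"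
    by (intro measure_mono_fmeasurable) auto
  then show ?thesis unfolding uf_def by simp
qed

lemma uf_mono: "n \<le> m \<Longrightarrow> uf eps y m \<le> uf eps y n"
  unfolding uf_def
  using AS_mono[of n m eps y]
  by (intro divide_right_mono measure_mono_fmeasurable) auto

lemma uf_cong: "(\<And>i. i \<in> {1..n} \<Longrightarrow> y i = y' i) \<Longrightarrow> uf eps y n = uf eps y' n"
  unfolding uf_def using AS_cong[of n y y' eps] by simp

lemma ennreal_uf: "ennreal (uf eps y n) = emeasure lborel ({-1<..<1} - AS eps y n) / 2"
proof -
  have "emeasure lborel ({-1<..<1} - AS eps y n) \<le> emeasure lborel {-1<..<1::real}"
    by (intro emeasure_mono) auto
  then have "emeasure lborel ({-1<..<1} - AS eps y n) \<noteq> \<infinity>" by (auto simp: top_unique)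
  then show ?thesis unfolding uf_def measure_def
    by (subst divide_ennreal[symmetric]) (auto simp: ennreal_enn2real_if)
qed

lemma uf_measurable:
  assumes "k \<le> n"
  shows "(\<lambda>y. uf eps y k) \<in> borel_measurable (PiM {1..n} (\<lambda>_. borel))"
proof -
  let ?N = "PiM {1..n} (\<lambda>_. borel::real measure)"
  define Q where "Q = {p \<in> space (?N \<Otimes>\<^sub>M borel). snd p \<in> {-1<..<1} \<and> \<not> (snd p \<in> AS eps (fst p) k)}"
  have pr: "Measurable.pred (?N \<Otimes>\<^sub>M borel) (\<lambda>p. snd p \<in> AS eps (fst p) k)"
    using AS_pred[OF assms] .
  have "Q \<in> sets (?N \<Otimes>\<^sub>M borel)" unfolding Q_def using pr by measurable
  then have "Q \<in> sets (?N \<Otimes>\<^sub>M lborel)" by (simp cong: sets_pair_measure_cong)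
  then have "(\<lambda>y. emeasure lborel (Pair y -` Q)) \<in> borel_measurable ?N"
    by (rule lborel.measurable_emeasure_Pair)
  then have "(\<lambda>y. enn2real (emeasure lborel (Pair y -` Q))) \<in> borel_measurable ?N"
    by (rule borel_measurable_enn2real)
  then have "(\<lambda>y. enn2real (emeasure lborel (Pair y -` Q)) / 2) \<in> borel_measurable ?N"
    by (rule borel_measurable_divide) simp
  moreover have "\<And>y. y \<in> space ?N \<Longrightarrow> enn2real (emeasure lborel (Pair y -` Q)) / 2 = uf eps y k"
  proof -
    fix y assume "y \<in> space ?N"
    then have "Pair y -` Q = {-1<..<1} - AS eps y k" by (auto simp: Q_def space_pair_measure)
    then show "enn2real (emeasure lborel (Pair y -` Q)) / 2 = uf eps y k" unfolding uf_def measure_def by simp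
  qed
  ultimately show ?thesis by (subst measurable_cong[where g="\<lambda>y. enn2real (emeasure lborel (Pair y -` Q)) / 2"]) auto
qed



lemma refl_measure:
  fixes z :: real
  assumes "B \<in> sets borel"
  shows "emeasure lborel {x. z - x \<in> B} = emeasure lborel B"
proof -
  have "lborel = density (distr lborel borel (\<lambda>x. z + (-1) * x)) (\<lambda>_. ennreal (abs (-1::real)))"
    by (rule lborel_real_affine) simp
  then have "lborel = distr lborel borel (\<lambda>x::real. z + (-1) * x)" by (simp add: density_1)
  then have "emeasure lborel B = emeasure (distr lborel borel (\<lambda>x::real. z + (-1) * x)) B" by simp
  also have "\<dots> = emeasure lborel ((\<lambda>x::real. z + (-1) * x) -` B \<inter> space lborel)"
    by (rule emeasure_distr) (use assms in auto)
  also have "(\<lambda>x::real. z + (-1) * x) -` B \<inter> space lborel = {x. z - x \<in> B}" by auto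
  finally show ?thesis by simp
qed

definition Gs :: "real set \<Rightarrow> real \<Rightarrow> real set" where
  "Gs A z = {x \<in> {-1..1}. z - x \<notin> A}"

lemma Gs_bound_a:
  assumes A: "A \<in> sets borel" and z: "z \<in> {-1<..<1}"
  shows "emeasure lborel (Gs A z) \<le> ennreal \<bar>z\<bar> + emeasure lborel ({-1<..<1} - A)"
proof -
  have sub: "Gs A z \<subseteq> ({-1..z-1} \<union> {z+1..1}) \<union> {x. z - x \<in> {-1<..<1} - A}"
    unfolding Gs_def by auto
  have "emeasure lborel (Gs A z) \<le> emeasure lborel (({-1..z-1} \<union> {z+1..1}) \<union> {x. z - x \<in> {-1<..<1} - A})"
    using sub A by (intro emeasure_mono) auto
  also have "\<dots> \<le> emeasure lborel ({-1..z-1} \<union> {z+1..1}) + emeasure lborel {x. z - x \<in> {-1<..<1} - A}"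
    using A by (intro emeasure_subadditive) auto
  also have "emeasure lborel ({-1..z-1} \<union> {z+1..1}) \<le> emeasure lborel {-1..z-1} + emeasure lborel {z+1..1}"
    by (intro emeasure_subadditive) auto
  also have "emeasure lborel {-1..z-1} + emeasure lborel {z+1..1} = ennreal \<bar>z\<bar>"
    using z by (cases "z \<ge> 0") (auto simp: emeasure_lborel_Icc_eq)
  also have "emeasure lborel {x. z - x \<in> {-1<..<1} - A} = emeasure lborel ({-1<..<1} - A)"
    using A by (intro refl_measure) auto
  finally show ?thesis by (simp add: add_right_mono)
qed

lemma Gs_bound_b:
  assumes A: "A \<in> sets borel" and z: "z \<in> {-1<..<1}" and e: "0 < e" "e \<le> 1" and Ae: "{-e<..<e} \<subseteq> A"
  shows "emeasure lborel (Gs A z) \<le> ennreal (2 - e)"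
proof -
  obtain a where a: "{a<..<a+e} \<subseteq> {-1..1}" "\<And>x. x \<in> {a<..<a+e} \<Longrightarrow> z - x \<in> A"
  proof (cases "z \<ge> 0")
    case True
    show ?thesis
      by (rule that[of "z - e"]) (use True z e Ae in \<open>auto simp: subset_eq\<close>)
  next
    case False
    show ?thesis
      by (rule that[of "z"]) (use False z e Ae in \<open>auto simp: subset_eq\<close>)
  qed
  have "Gs A z \<subseteq> {-1..1} - {a<..<a+e}" using a unfolding Gs_def by auto
  then have "emeasure lborel (Gs A z) \<le> emeasure lborel ({-1..1} - {a<..<a+e})"
    using A unfolding Gs_def by (intro emeasure_mono) auto
  also have "\<dots> = emeasure lborel {-1..1::real} - emeasure lborel {a<..<a+e}"
    using a e by (intro emeasure_Diff) auto
  also have "\<dots> = ennreal (2 - e)"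
    using e by (simp add: ennreal_minus[symmetric])
  finally show ?thesis .
qed

lemma key_eq:
  assumes A[measurable]: "A \<in> sets borel"
  shows "(\<integral>\<^sup>+x. ennreal (measure lborel {z \<in> {-1<..<1}. z \<notin> A \<and> z - x \<notin> A} / 2) \<partial>uniform_measure lborel {-1..1})
     = (\<integral>\<^sup>+z. indicator ({-1<..<1} - A) z * emeasure lborel (Gs A z) \<partial>lborel) / 4"
proof -
  define h where "h = (\<lambda>x z::real. indicator ({-1<..<1} - A) z * indicator (UNIV - A) (z - x) :: ennreal)"
  have hm: "(\<lambda>(x,z). indicator {-1..1} x * h x z) \<in> borel_measurable (lborel \<Otimes>\<^sub>M lborel)"
    unfolding h_def by measurable
  have hm1: "(\<lambda>(x,z). h x z) \<in> borel_measurable (lborel \<Otimes>\<^sub>M lborel)"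
    unfolding h_def by measurable
  have 1: "ennreal (measure lborel {z \<in> {-1<..<1}. z \<notin> A \<and> z - x \<notin> A} / 2) = (\<integral>\<^sup>+z. h x z \<partial>lborel) / 2" for x
  proof -
    let ?S = "{z \<in> {-1<..<1}. z \<notin> A \<and> z - x \<notin> A}"
    have S: "?S \<in> sets borel" by measurable
    have "emeasure lborel ?S \<le> emeasure lborel {-1<..<1::real}" by (intro emeasure_mono) auto
    then have fin: "emeasure lborel ?S \<noteq> \<infinity>" by (auto simp: top_unique)
    have "(\<integral>\<^sup>+z. h x z \<partial>lborel) = (\<integral>\<^sup>+z. indicator ?S z \<partial>lborel)"
      unfolding h_def by (intro nn_integral_cong) (auto simp: indicator_def)
    also have "\<dots> = emeasure lborel ?S" using S by simp
    finally have "(\<integral>\<^sup>+z. h x z \<partial>lborel) = emeasure lborel ?S" .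
    then show ?thesis unfolding measure_def using fin
      by (subst divide_ennreal[symmetric]) (auto simp: ennreal_enn2real_if)
  qed
  have gm0: "(\<lambda>x. (\<integral>\<^sup>+z. h x z \<partial>lborel)) \<in> borel_measurable lborel"
    by (rule lborel.borel_measurable_nn_integral) (use hm1 in simp)
  have gm: "(\<lambda>x. (\<integral>\<^sup>+z. h x z \<partial>lborel) / 2) \<in> borel_measurable lborel"
    using gm0 by measurable
  have "(\<integral>\<^sup>+x. ennreal (measure lborel {z \<in> {-1<..<1}. z \<notin> A \<and> z - x \<notin> A} / 2) \<partial>uniform_measure lborel {-1..1})
      = (\<integral>\<^sup>+x. (\<integral>\<^sup>+z. h x z \<partial>lborel) / 2 \<partial>uniform_measure lborel {-1..1})"
    unfolding 1 ..
  also have "\<dots> = (\<integral>\<^sup>+x. (\<integral>\<^sup>+z. h x z \<partial>lborel) / 2 * indicator {-1..1} x \<partial>lborel) / emeasure lborel {-1..1::real}"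
    using gm by (intro nn_integral_uniform_measure) auto
  also have "(\<lambda>x. (\<integral>\<^sup>+z. h x z \<partial>lborel) / 2 * indicator {-1..1} x) = (\<lambda>x. (\<integral>\<^sup>+z. indicator {-1..1} x * h x z \<partial>lborel) / 2)"
  proof
    fix x
    have "(\<integral>\<^sup>+z. indicator {-1..1} x * h x z \<partial>lborel) = indicator {-1..1} x * (\<integral>\<^sup>+z. h x z \<partial>lborel)"
      by (rule nn_integral_cmult) (unfold h_def, measurable)
    then show "(\<integral>\<^sup>+z. h x z \<partial>lborel) / 2 * indicator {-1..1} x = (\<integral>\<^sup>+z. indicator {-1..1} x * h x z \<partial>lborel) / 2"
      by (simp add: divide_ennreal_def ac_simps)
  qed
  also have "(\<integral>\<^sup>+x. (\<integral>\<^sup>+z. indicator {-1..1} x * h x z \<partial>lborel) / 2 \<partial>lborel) = (\<integral>\<^sup>+x. (\<integral>\<^sup>+z. indicator {-1..1} x * h x z \<partial>lborel) \<partial>lborel) / 2"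
  proof -
    have "(\<lambda>x. (\<integral>\<^sup>+z. indicator {-1..1} x * h x z \<partial>lborel)) \<in> borel_measurable lborel"
      by (rule lborel.borel_measurable_nn_integral) (use hm in simp)
    then show ?thesis by (rule nn_integral_divide)
  qed
  also have "(\<integral>\<^sup>+x. (\<integral>\<^sup>+z. indicator {-1..1} x * h x z \<partial>lborel) \<partial>lborel) = (\<integral>\<^sup>+z. (\<integral>\<^sup>+x. indicator {-1..1} x * h x z \<partial>lborel) \<partial>lborel)"
    using lborel_pair.Fubini'[of "\<lambda>x z. indicator {-1..1} x * h x z"] hm by simp
  also have "\<dots> = (\<integral>\<^sup>+z. indicator ({-1<..<1} - A) z * emeasure lborel (Gs A z) \<partial>lborel)"
  proof (intro nn_integral_cong)
    fix z
    have G: "Gs A z \<in> sets lborel" unfolding Gs_def by measurable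
    have "(\<integral>\<^sup>+x. indicator {-1..1} x * h x z \<partial>lborel) = (\<integral>\<^sup>+x. indicator ({-1<..<1} - A) z * indicator (Gs A z) x \<partial>lborel)"
      unfolding h_def Gs_def by (intro nn_integral_cong) (auto simp: indicator_def)
    also have "\<dots> = indicator ({-1<..<1} - A) z * (\<integral>\<^sup>+x. indicator (Gs A z) x \<partial>lborel)"
      using G by (intro nn_integral_cmult) simp
    also have "\<dots> = indicator ({-1<..<1} - A) z * emeasure lborel (Gs A z)"
      using G by simp
    finally show "(\<integral>\<^sup>+x. indicator {-1..1} x * h x z \<partial>lborel) = indicator ({-1<..<1} - A) z * emeasure lborel (Gs A z)" .
  qed
  moreover have "inverse (2::ennreal) * inverse 2 = inverse 4"
    using ennreal_inverse_mult[of 2 2] by simp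
  ultimately show ?thesis by (simp add: divide_ennreal_def mult.assoc)
qed

lemma emeasure_IA: "A \<in> sets borel \<Longrightarrow> emeasure lborel ({-1<..<1} - A) = ennreal (measure lborel ({-1<..<1::real} - A))"
proof -
  assume A: "A \<in> sets borel"
  have "emeasure lborel ({-1<..<1} - A) \<le> emeasure lborel {-1<..<1::real}" by (intro emeasure_mono) auto
  then have "emeasure lborel ({-1<..<1} - A) \<noteq> \<infinity>" by (auto simp: top_unique)
  then show ?thesis by (simp add: emeasure_eq_ennreal_measure)
qed

lemma bound_b:
  assumes A[measurable]: "A \<in> sets borel" and e: "0 < e" "e \<le> 1" and Ae: "{-e<..<e} \<subseteq> A"
  shows "(\<integral>\<^sup>+x. ennreal (measure lborel {z \<in> {-1<..<1}. z \<notin> A \<and> z - x \<notin> A} / 2) \<partial>uniform_measure lborel {-1..1})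
     \<le> ennreal ((1 - e/2) * (measure lborel ({-1<..<1} - A) / 2))"
proof -
  let ?b = "measure lborel ({-1<..<1::real} - A)"
  have "(\<integral>\<^sup>+z. indicator ({-1<..<1} - A) z * emeasure lborel (Gs A z) \<partial>lborel)
      \<le> (\<integral>\<^sup>+z. ennreal (2 - e) * indicator ({-1<..<1} - A) z \<partial>lborel)"
  proof (intro nn_integral_mono)
    fix z
    show "indicator ({-1<..<1} - A) z * emeasure lborel (Gs A z) \<le> ennreal (2 - e) * indicator ({-1<..<1} - A) z"
      using Gs_bound_b[OF A _ e Ae, of z] by (cases "z \<in> {-1<..<1} - A") auto
  qed
  also have "\<dots> = ennreal (2 - e) * ennreal ?b"
    by (subst nn_integral_cmult_indicator) (auto simp: emeasure_IA)
  also have "\<dots> = ennreal ((2 - e) * ?b)" using e by (simp add: ennreal_mult)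
  finally have 1: "(\<integral>\<^sup>+z. indicator ({-1<..<1} - A) z * emeasure lborel (Gs A z) \<partial>lborel) \<le> ennreal ((2 - e) * ?b)" .
  have "(\<integral>\<^sup>+z. indicator ({-1<..<1} - A) z * emeasure lborel (Gs A z) \<partial>lborel) / 4 \<le> ennreal ((2 - e) * ?b) / 4"
    using 1 by (rule divide_right_mono_ennreal)
  also have "\<dots> = ennreal ((2 - e) * ?b / 4)"
    using e by (subst divide_ennreal[symmetric]) auto
  also have "(2 - e) * ?b / 4 = (1 - e/2) * (?b / 2)" by (simp add: field_simps)
  finally show ?thesis unfolding key_eq[OF A] .
qed

lemma int_ramp_pos:
  assumes "0 \<le> c" "c \<le> 1"
  shows "(\<integral>\<^sup>+z. ennreal (indicator {c..1} z * (z - c)) \<partial>lborel) = ennreal ((1 - c)^2 / 2)"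
proof -
  have "((\<lambda>z. z - c) has_integral ((\<lambda>z. (z - c)^2 / 2) 1 - (\<lambda>z. (z - c)^2 / 2) c)) {c..1}"
  proof (rule fundamental_theorem_of_calculus)
    show "c \<le> 1" by fact
    fix x assume "x \<in> {c..1}"
    have "((\<lambda>z. (z - c)^2 / 2) has_real_derivative (x - c)) (at x within {c..1})"
      by (auto intro!: derivative_eq_intros)
    then show "((\<lambda>z. (z - c)^2 / 2) has_vector_derivative (x - c)) (at x within {c..1})"
      by (simp add: has_real_derivative_iff_has_vector_derivative)
  qed
  then have "((\<lambda>z. z - c) has_integral ((1 - c)^2 / 2)) {c..1}" by simp
  then show ?thesis by (intro nn_integral_has_integral_lebesgue) auto
qed

lemma int_ramp_neg:
  assumes "0 \<le> c" "c \<le> 1"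
  shows "(\<integral>\<^sup>+z. ennreal (indicator {-1 .. -c} z * (- z - c)) \<partial>lborel) = ennreal ((1 - c)^2 / 2)"
proof -
  define F where "F = (\<lambda>z::real. - (((- z - c)^2) / 2))"
  have "((\<lambda>z. - z - c) has_integral (F (-c) - F (-1))) {-1 .. -c}"
  proof (rule fundamental_theorem_of_calculus)
    show "-1 \<le> -c" using assms by simp
    fix x assume "x \<in> {-1 .. -c}"
    have "(F has_real_derivative (- x - c)) (at x within {-1 .. -c})"
      unfolding F_def by (auto intro!: derivative_eq_intros simp: algebra_simps)
    then show "(F has_vector_derivative (- x - c)) (at x within {-1 .. -c})"
      by (simp add: has_real_derivative_iff_has_vector_derivative)
  qed
  moreover have "F (-c) - F (-1) = (1 - c)^2 / 2" unfolding F_def by (simp add: power2_eq_square algebra_simps)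
  ultimately have "((\<lambda>z. - z - c) has_integral ((1 - c)^2 / 2)) {-1 .. -c}" by simp
  then show ?thesis by (intro nn_integral_has_integral_lebesgue) auto
qed

lemma measure_IA_le2:
  assumes "A \<in> sets borel" shows "measure lborel ({-1<..<1::real} - A) \<le> 2"
proof -
  have "measure lborel ({-1<..<1::real} - A) \<le> measure lborel {-1<..<1::real}"
    using assms by (intro measure_mono_fmeasurable) auto
  then show ?thesis by simp
qed

lemma L1: fixes b c :: real assumes c0: "0 \<le> c" "c \<le> 1" and b0: "0 \<le> b"
  shows "ennreal c * ennreal b + (ennreal ((1 - c)^2 / 2) + ennreal ((1 - c)^2 / 2)) = ennreal (c * b + (1 - c)^2)"
proof -
  have e1: "ennreal c * ennreal b = ennreal (c*b)" using c0 b0 by (simp add: ennreal_mult)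
  have e2: "ennreal ((1 - c)^2 / 2) + ennreal ((1 - c)^2 / 2) = ennreal ((1 - c)^2 / 2 + (1 - c)^2 / 2)"
    by (rule ennreal_plus[symmetric]) auto
  have e3: "ennreal (c*b) + ennreal ((1 - c)^2 / 2 + (1 - c)^2 / 2) = ennreal (c*b + ((1 - c)^2 / 2 + (1 - c)^2 / 2))"
    by (rule ennreal_plus[symmetric]) (use c0 b0 in auto)
  show ?thesis unfolding e1 e2 e3 by (rule arg_cong[where f=ennreal]) simp
qed
lemma L2: fixes b :: real assumes b0: "0 \<le> b" and b1: "b \<le> 1"
  shows "ennreal (b - b^2/4) + ennreal b * ennreal b = ennreal (b - b^2/4 + b * b)"
proof -
  have "b^2 \<le> b" using b0 b1 by (simp add: power2_eq_square mult_left_le_one_le)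
  then have p: "0 \<le> b - b^2/4" using b0 by simp
  have e1: "ennreal b * ennreal b = ennreal (b*b)" using b0 by (simp add: ennreal_mult)
  show ?thesis unfolding e1 by (rule ennreal_plus[symmetric]) (use p b0 in auto)
qed

lemma bathtub:
  assumes A[measurable]: "A \<in> sets borel"
  defines "b \<equiv> measure lborel ({-1<..<1::real} - A)"
  shows "(\<integral>\<^sup>+z. indicator ({-1<..<1} - A) z * ennreal \<bar>z\<bar> \<partial>lborel) \<le> ennreal (b - b^2/4)"
proof -
  define c where "c = 1 - b/2"
  have b0: "0 \<le> b" unfolding b_def by simp
  have b2: "b \<le> 2" unfolding b_def by (rule measure_IA_le2) simp
  have c0: "0 \<le> c" "c \<le> 1" using b0 b2 unfolding c_def by auto
  have "(\<integral>\<^sup>+z. indicator ({-1<..<1} - A) z * ennreal \<bar>z\<bar> \<partial>lborel)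
     \<le> (\<integral>\<^sup>+z. ennreal c * indicator ({-1<..<1} - A) z + (ennreal (indicator {c..1} z * (z - c)) + ennreal (indicator {-1 .. -c} z * (- z - c))) \<partial>lborel)"
  proof (intro nn_integral_mono)
    fix z :: real
    show "indicator ({-1<..<1} - A) z * ennreal \<bar>z\<bar> \<le> ennreal c * indicator ({-1<..<1} - A) z + (ennreal (indicator {c..1} z * (z - c)) + ennreal (indicator {-1 .. -c} z * (- z - c)))"
    proof (cases "z \<in> {-1<..<1} - A")
      case True
      have p: "0 \<le> indicator {c..1} z * (z - c)" by (auto simp: indicator_def)
      have q: "0 \<le> indicator {-1 .. -c} z * (- z - c)" by (auto simp: indicator_def)
      have r: "\<bar>z\<bar> \<le> c + (indicator {c..1} z * (z - c) + indicator {-1 .. -c} z * (- z - c))"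
        using True c0 p q by (auto simp: indicator_def)
      have "ennreal \<bar>z\<bar> \<le> ennreal (c + (indicator {c..1} z * (z - c) + indicator {-1 .. -c} z * (- z - c)))"
        using r by (rule ennreal_leI)
      also have "\<dots> = ennreal c + (ennreal (indicator {c..1} z * (z - c)) + ennreal (indicator {-1 .. -c} z * (- z - c)))"
        using p q c0 by (simp add: ennreal_plus)
      finally show ?thesis using True by simp
    qed simp
  qed
  also have "\<dots> = (\<integral>\<^sup>+z. ennreal c * indicator ({-1<..<1} - A) z \<partial>lborel) + ((\<integral>\<^sup>+z. ennreal (indicator {c..1} z * (z - c)) \<partial>lborel) + (\<integral>\<^sup>+z. ennreal (indicator {-1 .. -c} z * (- z - c)) \<partial>lborel))"
  proof -
    have m1: "(\<lambda>z. ennreal c * indicator ({-1<..<1} - A) z) \<in> borel_measurable lborel" by measurable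
    have m2: "(\<lambda>z. ennreal (indicator {c..1} z * (z - c))) \<in> borel_measurable lborel" by measurable
    have m3: "(\<lambda>z. ennreal (indicator {-1 .. -c} z * (- z - c))) \<in> borel_measurable lborel" by measurable
    have m4: "(\<lambda>z. ennreal (indicator {c..1} z * (z - c)) + ennreal (indicator {-1 .. -c} z * (- z - c))) \<in> borel_measurable lborel"
      using m2 m3 by (rule borel_measurable_add)
    show ?thesis by (simp only: nn_integral_add[OF m1 m4] nn_integral_add[OF m2 m3])
  qed
  also have "\<dots> = ennreal c * ennreal b + (ennreal ((1 - c)^2 / 2) + ennreal ((1 - c)^2 / 2))"
    using c0 by (simp add: int_ramp_pos int_ramp_neg nn_integral_cmult_indicator emeasure_IA b_def)
  also have "\<dots> = ennreal (c * b + (1 - c)^2)"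
    using c0 b0 by (rule L1)
  also have "c * b + (1 - c)^2 = b - b^2/4" unfolding c_def by (simp add: power2_eq_square field_simps)
  finally show ?thesis .
qed

lemma bound_a:
  fixes A :: "real set"
  assumes A[measurable]: "A \<in> sets borel" and b1: "measure lborel ({-1<..<1} - A) \<le> 1"
  shows "(\<integral>\<^sup>+x. ennreal (measure lborel {z \<in> {-1<..<1}. z \<notin> A \<and> z - x \<notin> A} / 2) \<partial>uniform_measure lborel {-1..1})
     \<le> ennreal (7/8 * (measure lborel ({-1<..<1} - A) / 2))"
proof -
  let ?b = "measure lborel ({-1<..<1::real} - A)"
  have b0: "0 \<le> ?b" by simp
  have "(\<integral>\<^sup>+z. indicator ({-1<..<1} - A) z * emeasure lborel (Gs A z) \<partial>lborel)
      \<le> (\<integral>\<^sup>+z. indicator ({-1<..<1} - A) z * ennreal \<bar>z\<bar> + ennreal ?b * indicator ({-1<..<1} - A) z \<partial>lborel)"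
  proof (intro nn_integral_mono)
    fix z
    show "indicator ({-1<..<1} - A) z * emeasure lborel (Gs A z) \<le> indicator ({-1<..<1} - A) z * ennreal \<bar>z\<bar> + ennreal ?b * indicator ({-1<..<1} - A) z"
      using Gs_bound_a[OF A, of z] by (cases "z \<in> {-1<..<1} - A") (auto simp: emeasure_IA[OF A])
  qed
  also have "\<dots> = (\<integral>\<^sup>+z. indicator ({-1<..<1} - A) z * ennreal \<bar>z\<bar> \<partial>lborel) + (\<integral>\<^sup>+z. ennreal ?b * indicator ({-1<..<1} - A) z \<partial>lborel)"
  proof -
    have m1: "(\<lambda>z. indicator ({-1<..<1} - A) z * ennreal \<bar>z\<bar>) \<in> borel_measurable lborel" by measurable
    have m2: "(\<lambda>z. ennreal ?b * indicator ({-1<..<1} - A) z) \<in> borel_measurable lborel" by measurable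
    show ?thesis by (rule nn_integral_add[OF m1 m2])
  qed
  also have "\<dots> \<le> ennreal (?b - ?b^2/4) + ennreal ?b * ennreal ?b"
    using bathtub[OF A] by (intro add_mono) (auto simp: nn_integral_cmult_indicator emeasure_IA)
  also have "\<dots> = ennreal (?b - ?b^2/4 + ?b * ?b)"
    using b0 b1 by (rule L2)
  finally have 1: "(\<integral>\<^sup>+z. indicator ({-1<..<1} - A) z * emeasure lborel (Gs A z) \<partial>lborel) \<le> ennreal (?b - ?b^2/4 + ?b * ?b)" .
  have "(\<integral>\<^sup>+z. indicator ({-1<..<1} - A) z * emeasure lborel (Gs A z) \<partial>lborel) / 4 \<le> ennreal (?b - ?b^2/4 + ?b * ?b) / 4"
    using 1 by (rule divide_right_mono_ennreal)
  also have "\<dots> = ennreal ((?b - ?b^2/4 + ?b * ?b) / 4)"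
  proof -
    have "?b * ?b \<le> ?b" using b0 b1 by (simp add: mult_left_le_one_le)
    then have "0 \<le> ?b - ?b^2/4 + ?b * ?b" using b0 by (simp add: power2_eq_square)
    then show ?thesis by (subst divide_ennreal[symmetric]) auto
  qed
  also have "\<dots> \<le> ennreal (7/8 * (?b / 2))"
  proof (rule ennreal_leI)
    have "?b * ?b \<le> ?b" using b0 b1 by (simp add: mult_left_le_one_le)
    then show "(?b - ?b^2/4 + ?b * ?b) / 4 \<le> 7/8 * (?b / 2)" by (simp add: power2_eq_square)
  qed
  finally show ?thesis unfolding key_eq[OF A] .
qed



definition ufs :: "real \<Rightarrow> (nat \<Rightarrow> real) \<Rightarrow> nat \<Rightarrow> real \<Rightarrow> real" where
  "ufs eps y m x = measure lborel {z \<in> {-1<..<1}. z \<notin> AS eps y m \<and> z - x \<notin> AS eps y m} / 2"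

lemma uf_upd: "uf eps (y(Suc m := x)) (Suc m) = ufs eps y m x"
proof -
  have c: "AS eps (y(Suc m := x)) m = AS eps y m" by (rule AS_cong) auto
  have "{-1<..<1} - AS eps (y(Suc m := x)) (Suc m) = {z \<in> {-1<..<1}. z \<notin> AS eps y m \<and> z - x \<notin> AS eps y m}"
    using AS_Suc[of _ eps "y(Suc m := x)" m] c by auto
  then show ?thesis unfolding uf_def ufs_def by simp
qed

lemma ufs_measurable:
  "(\<lambda>p. ufs eps (fst p) m (snd p)) \<in> borel_measurable (PiM {1..m} (\<lambda>_. borel) \<Otimes>\<^sub>M borel)"
proof -
  let ?N = "PiM {1..m} (\<lambda>_. borel::real measure)"
  let ?P = "?N \<Otimes>\<^sub>M (borel::real measure)"
  have pr: "Measurable.pred (?N \<Otimes>\<^sub>M borel) (\<lambda>p. snd p \<in> AS eps (fst p) m)"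
    using AS_pred[of m m eps] by simp
  have f1: "(\<lambda>q. (fst (fst q), snd q)) \<in> measurable (?P \<Otimes>\<^sub>M borel) (?N \<Otimes>\<^sub>M borel)" by measurable
  have f2: "(\<lambda>q. (fst (fst q), snd q - snd (fst q))) \<in> measurable (?P \<Otimes>\<^sub>M borel) (?N \<Otimes>\<^sub>M borel)" by measurable
  have p1: "Measurable.pred (?P \<Otimes>\<^sub>M borel) (\<lambda>q. snd q \<in> AS eps (fst (fst q)) m)"
    using measurable_compose[OF f1 pr] by simp
  have p2: "Measurable.pred (?P \<Otimes>\<^sub>M borel) (\<lambda>q. snd q - snd (fst q) \<in> AS eps (fst (fst q)) m)"
    using measurable_compose[OF f2 pr] by simp
  define Q where "Q = {q \<in> space (?P \<Otimes>\<^sub>M borel). snd q \<in> {-1<..<1} \<and> \<not> (snd q \<in> AS eps (fst (fst q)) m) \<and> \<not> (snd q - snd (fst q) \<in> AS eps (fst (fst q)) m)}"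
  have "Q \<in> sets (?P \<Otimes>\<^sub>M borel)" unfolding Q_def using p1 p2 by measurable
  then have "Q \<in> sets (?P \<Otimes>\<^sub>M lborel)" by (simp cong: sets_pair_measure_cong)
  then have "(\<lambda>p. emeasure lborel (Pair p -` Q)) \<in> borel_measurable ?P"
    by (rule lborel.measurable_emeasure_Pair)
  then have "(\<lambda>p. enn2real (emeasure lborel (Pair p -` Q))) \<in> borel_measurable ?P"
    by (rule borel_measurable_enn2real)
  then have "(\<lambda>p. enn2real (emeasure lborel (Pair p -` Q)) / 2) \<in> borel_measurable ?P"
    by (rule borel_measurable_divide) simp
  moreover have "\<And>p. p \<in> space ?P \<Longrightarrow> enn2real (emeasure lborel (Pair p -` Q)) / 2 = ufs eps (fst p) m (snd p)"
  proof -
    fix p assume "p \<in> space ?P"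
    then have "Pair p -` Q = {z \<in> {-1<..<1}. z \<notin> AS eps (fst p) m \<and> z - snd p \<notin> AS eps (fst p) m}"
      by (auto simp: Q_def space_pair_measure)
    then show "enn2real (emeasure lborel (Pair p -` Q)) / 2 = ufs eps (fst p) m (snd p)"
      unfolding ufs_def measure_def by simp
  qed
  ultimately show ?thesis by (subst measurable_cong[where g="\<lambda>p. enn2real (emeasure lborel (Pair p -` Q)) / 2"]) auto
qed

lemma measure_IA_AS: "measure lborel ({-1<..<1} - AS eps y m) = 2 * uf eps y m"
  unfolding uf_def by simp

lemma rate_a:
  assumes "uf eps y m \<le> 1/2"
  shows "(\<integral>\<^sup>+x. ennreal (ufs eps y m x) \<partial>uniform_measure lborel {-1..1}) \<le> ennreal (7/8 * uf eps y m)"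
  using bound_a[of "AS eps y m"] assms unfolding ufs_def measure_IA_AS by simp

lemma rate_b:
  assumes "0 < e" "e \<le> 1" "e \<le> eps"
  shows "(\<integral>\<^sup>+x. ennreal (ufs eps y m x) \<partial>uniform_measure lborel {-1..1}) \<le> ennreal ((1 - e/2) * uf eps y m)"
proof -
  have "{-e<..<e} \<subseteq> AS eps y m" using AS_zero[of eps y m] assms by auto
  then show ?thesis
    using bound_b[of "AS eps y m" e] assms unfolding ufs_def measure_IA_AS by simp
qed



locale lsetup = prob_space M for M :: "'a measure" +
  fixes X :: "nat \<Rightarrow> 'a \<Rightarrow> real" and eps :: real
  assumes indep: "indep_vars (\<lambda>_. borel) X {1..}"
  and unif: "\<And>i. 1 \<le> i \<Longrightarrow> distr M borel (X i) = uniform_measure lborel {-1..1}"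
  and eps_pos: "0 < eps"
begin

definition Y :: "nat \<Rightarrow> 'a \<Rightarrow> (nat \<Rightarrow> real)" where "Y n \<omega> = restrict (\<lambda>i. X i \<omega>) {1..n}"
definition u :: "nat \<Rightarrow> 'a \<Rightarrow> real" where "u n \<omega> = uf eps (\<lambda>i. X i \<omega>) n"

lemma X_meas: "1 \<le> i \<Longrightarrow> X i \<in> borel_measurable M"
  using indep unfolding indep_vars_def by auto

lemma Y_meas: "Y n \<in> measurable M (PiM {1..n} (\<lambda>_. borel))"
  unfolding Y_def by (intro measurable_restrict X_meas) auto

lemma u_Y: "k \<le> n \<Longrightarrow> u k \<omega> = uf eps (Y n \<omega>) k"
  unfolding u_def Y_def by (rule uf_cong) auto

lemma u_meas: "u k \<in> borel_measurable M"
proof -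
  have "(\<lambda>\<omega>. uf eps (Y k \<omega>) k) \<in> borel_measurable M"
    using measurable_compose[OF Y_meas uf_measurable[of k k eps]] by simp
  moreover have "u k = (\<lambda>\<omega>. uf eps (Y k \<omega>) k)" using u_Y by auto
  ultimately show ?thesis by simp
qed

definition Z :: "nat \<Rightarrow> 'a \<Rightarrow> (nat \<Rightarrow> real)" where "Z m \<omega> = restrict (\<lambda>i. X i \<omega>) {Suc m}"

lemma Z_meas: "Z m \<in> measurable M (PiM {Suc m} (\<lambda>_. borel))"
  unfolding Z_def by (intro measurable_restrict X_meas) auto

lemma indep_YZ: "indep_var (PiM {1..m} (\<lambda>_. borel)) (Y m) (PiM {Suc m} (\<lambda>_. borel)) (Z m)"
  unfolding Y_def Z_def by (rule indep_var_restrict[OF indep]) auto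

lemma pair_distr: "distr M (PiM {1..m} (\<lambda>_. borel) \<Otimes>\<^sub>M PiM {Suc m} (\<lambda>_. borel)) (\<lambda>\<omega>. (Y m \<omega>, Z m \<omega>))
   = distr M (PiM {1..m} (\<lambda>_. borel)) (Y m) \<Otimes>\<^sub>M distr M (PiM {Suc m} (\<lambda>_. borel)) (Z m)"
  using indep_YZ[of m] unfolding indep_var_distribution_eq by simp

lemma step:
  fixes g :: "(nat \<Rightarrow> real) \<Rightarrow> bool" and \<rho> :: real
  assumes gm: "Measurable.pred (PiM {1..m} (\<lambda>_. borel)) g"
    and gc: "\<And>y. g (restrict y {1..m}) = g y"
    and rho: "0 \<le> \<rho>"
    and rate: "\<And>y. g y \<Longrightarrow> (\<integral>\<^sup>+x. ennreal (ufs eps y m x) \<partial>uniform_measure lborel {-1..1}) \<le> ennreal (\<rho> * uf eps y m)"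
  shows "(\<integral>\<^sup>+\<omega>. (if g (\<lambda>i. X i \<omega>) then ennreal (u (Suc m) \<omega>) else 0) \<partial>M)
      \<le> ennreal \<rho> * (\<integral>\<^sup>+\<omega>. (if g (\<lambda>i. X i \<omega>) then ennreal (u m \<omega>) else 0) \<partial>M)"
proof -
  let ?N = "PiM {1..m} (\<lambda>_. borel::real measure)"
  let ?N1 = "PiM {Suc m} (\<lambda>_. borel::real measure)"
  let ?U = "uniform_measure lborel {-1..1::real}"
  let ?D = "distr M ?N (Y m)"
  let ?D1 = "distr M ?N1 (Z m)"
  define H where "H = (\<lambda>p. if g (fst p) then ennreal (ufs eps (fst p) m (snd p)) else 0)"
  have Hm: "H \<in> borel_measurable (?N \<Otimes>\<^sub>M borel)"
  proof -
    have "Measurable.pred (?N \<Otimes>\<^sub>M borel) (\<lambda>p. g (fst p))"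
      using measurable_compose[OF measurable_fst gm] by simp
    then show ?thesis unfolding H_def using ufs_measurable[of eps m] by measurable
  qed
  have sm: "(\<lambda>q. (fst q, snd q (Suc m))) \<in> measurable (?N \<Otimes>\<^sub>M ?N1) (?N \<Otimes>\<^sub>M borel)"
    by measurable
  have H2m: "(\<lambda>q. H (fst q, snd q (Suc m))) \<in> borel_measurable (?N \<Otimes>\<^sub>M ?N1)"
    using measurable_compose[OF sm Hm] by simp
  have gY: "g (Y m \<omega>) = g (\<lambda>i. X i \<omega>)" for \<omega> unfolding Y_def using gc by simp
  have ufY: "uf eps ((Y m \<omega>)(Suc m := X (Suc m) \<omega>)) (Suc m) = u (Suc m) \<omega>" for \<omega>
    unfolding u_def Y_def by (rule uf_cong) auto
  have pm: "(\<lambda>\<omega>. (Y m \<omega>, Z m \<omega>)) \<in> measurable M (?N \<Otimes>\<^sub>M ?N1)"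
    using Y_meas Z_meas by measurable
  have "(\<integral>\<^sup>+\<omega>. (if g (\<lambda>i. X i \<omega>) then ennreal (u (Suc m) \<omega>) else 0) \<partial>M)
      = (\<integral>\<^sup>+\<omega>. (\<lambda>q. H (fst q, snd q (Suc m))) (Y m \<omega>, Z m \<omega>) \<partial>M)"
    unfolding H_def Z_def using gY ufY uf_upd by (intro nn_integral_cong) simp
  also have "\<dots> = (\<integral>\<^sup>+q. H (fst q, snd q (Suc m)) \<partial>distr M (?N \<Otimes>\<^sub>M ?N1) (\<lambda>\<omega>. (Y m \<omega>, Z m \<omega>)))"
    using H2m pm by (intro nn_integral_distr[symmetric]) simp_all
  also have "\<dots> = (\<integral>\<^sup>+q. H (fst q, snd q (Suc m)) \<partial>(?D \<Otimes>\<^sub>M ?D1))" unfolding pair_distr ..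
  also have "\<dots> = (\<integral>\<^sup>+y. \<integral>\<^sup>+z. H (y, z (Suc m)) \<partial>?D1 \<partial>?D)"
  proof -
    interpret D1: prob_space ?D1 by (rule prob_space_distr[OF Z_meas])
    have "(\<lambda>q. H (fst q, snd q (Suc m))) \<in> borel_measurable (?D \<Otimes>\<^sub>M ?D1)"
      using H2m by (simp cong: measurable_cong_sets sets_pair_measure_cong)
    from D1.nn_integral_fst[OF this] show ?thesis by simp
  qed
  also have "\<dots> = (\<integral>\<^sup>+y. \<integral>\<^sup>+x. H (y, x) \<partial>?U \<partial>?D)"
  proof (intro nn_integral_cong)
    fix y assume "y \<in> space ?D"
    then have y: "y \<in> space ?N" by simp
    have hy: "(\<lambda>x. H (y, x)) \<in> borel_measurable borel"
      using measurable_Pair2[OF Hm y] by simp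
    have "(\<integral>\<^sup>+z. H (y, z (Suc m)) \<partial>?D1) = (\<integral>\<^sup>+\<omega>. H (y, Z m \<omega> (Suc m)) \<partial>M)"
    proof (rule nn_integral_distr[OF Z_meas])
      show "(\<lambda>z. H (y, z (Suc m))) \<in> borel_measurable ?D1"
        using measurable_compose[OF measurable_component_singleton[of "Suc m" "{Suc m}" "\<lambda>_. borel"] hy] by simp
    qed
    also have "\<dots> = (\<integral>\<^sup>+\<omega>. H (y, X (Suc m) \<omega>) \<partial>M)" unfolding Z_def by simp
    also have "\<dots> = (\<integral>\<^sup>+x. H (y, x) \<partial>distr M borel (X (Suc m)))"
      using hy X_meas[of "Suc m"] by (intro nn_integral_distr[symmetric]) simp_all
    also have "\<dots> = (\<integral>\<^sup>+x. H (y, x) \<partial>?U)" using unif[of "Suc m"] by simp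
    finally show "(\<integral>\<^sup>+z. H (y, z (Suc m)) \<partial>?D1) = (\<integral>\<^sup>+x. H (y, x) \<partial>?U)" .
  qed
  also have "\<dots> \<le> (\<integral>\<^sup>+y. (if g y then ennreal (\<rho> * uf eps y m) else 0) \<partial>?D)"
  proof (intro nn_integral_mono)
    fix y
    show "(\<integral>\<^sup>+x. H (y, x) \<partial>?U) \<le> (if g y then ennreal (\<rho> * uf eps y m) else 0)"
      using rate[of y] unfolding H_def by simp
  qed
  also have "\<dots> = (\<integral>\<^sup>+\<omega>. (if g (Y m \<omega>) then ennreal (\<rho> * uf eps (Y m \<omega>) m) else 0) \<partial>M)"
  proof (rule nn_integral_distr[OF Y_meas])
    show "(\<lambda>y. if g y then ennreal (\<rho> * uf eps y m) else 0) \<in> borel_measurable ?D"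
      using gm uf_measurable[of m m eps] by simp
  qed
  also have "\<dots> = (\<integral>\<^sup>+\<omega>. ennreal \<rho> * (if g (\<lambda>i. X i \<omega>) then ennreal (u m \<omega>) else 0) \<partial>M)"
    using gY u_Y[of m m] rho by (intro nn_integral_cong) (simp add: ennreal_mult uf_nonneg)
  also have "\<dots> = ennreal \<rho> * (\<integral>\<^sup>+\<omega>. (if g (\<lambda>i. X i \<omega>) then ennreal (u m \<omega>) else 0) \<partial>M)"
  proof (rule nn_integral_cmult)
    have "(\<lambda>\<omega>. g (Y m \<omega>)) \<in> measurable M (count_space UNIV)"
      using measurable_compose[OF Y_meas gm] by simp
    then have "Measurable.pred M (\<lambda>\<omega>. g (\<lambda>i. X i \<omega>))" using gY by simp
    then show "(\<lambda>\<omega>. if g (\<lambda>i. X i \<omega>) then ennreal (u m \<omega>) else 0) \<in> borel_measurable M"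
      using u_meas[of m] by measurable
  qed
  finally show ?thesis .
qed

end



definition Gk :: "real \<Rightarrow> nat \<Rightarrow> (nat \<Rightarrow> real) \<Rightarrow> bool" where
  "Gk eps k y = (uf eps y k < 1/2 \<and> (\<forall>j<k. 1/2 \<le> uf eps y j))"

lemma Gk_pred: "k \<le> m \<Longrightarrow> Measurable.pred (PiM {1..m} (\<lambda>_. borel)) (Gk eps k)"
proof -
  assume km: "k \<le> m"
  have m1: "Measurable.pred (PiM {1..m} (\<lambda>_. borel)) (\<lambda>y. uf eps y k < 1/2)"
    using uf_measurable[OF km, of eps] by measurable
  have m2: "Measurable.pred (PiM {1..m} (\<lambda>_. borel)) (\<lambda>y. 1/2 \<le> uf eps y j)" if "j < k" for j
  proof -
    have "j \<le> m" using that km by simp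
    then show ?thesis using uf_measurable[of j m eps] by measurable
  qed
  have m3: "Measurable.pred (PiM {1..m} (\<lambda>_. borel)) (\<lambda>y. \<forall>j\<in>{..<k}. 1/2 \<le> uf eps y j)"
    using m2 by (intro pred_intros_finite) auto
  have "Measurable.pred (PiM {1..m} (\<lambda>_. borel)) (\<lambda>y. uf eps y k < 1/2 \<and> (\<forall>j\<in>{..<k}. 1/2 \<le> uf eps y j))"
    using m1 m3 by (rule pred_intros_logic)
  then show ?thesis unfolding Gk_def[abs_def] by (simp add: lessThan_def)
qed

lemma Gk_restrict: "k \<le> m \<Longrightarrow> Gk eps k (restrict y {1..m}) = Gk eps k y"
proof -
  assume km: "k \<le> m"
  have "uf eps (restrict y {1..m}) j = uf eps y j" if "j \<le> k" for j
    using that km by (intro uf_cong) auto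
  then show ?thesis unfolding Gk_def by auto
qed

lemma Gk_le: "Gk eps k y \<Longrightarrow> k \<le> m \<Longrightarrow> uf eps y m \<le> 1/2"
  unfolding Gk_def using uf_mono[of k m eps y] by auto

lemma Gk_disj: "Gk eps k y \<Longrightarrow> Gk eps k' y \<Longrightarrow> k = k'"
  unfolding Gk_def by (metis linorder_neqE_nat not_less)

context lsetup
begin

lemma iterate_G:
  assumes "k \<le> m"
  shows "(\<integral>\<^sup>+\<omega>. (if Gk eps k (\<lambda>i. X i \<omega>) then ennreal (u (m + t) \<omega>) else 0) \<partial>M)
      \<le> ennreal ((7/8)^t) * (\<integral>\<^sup>+\<omega>. (if Gk eps k (\<lambda>i. X i \<omega>) then ennreal (u m \<omega>) else 0) \<partial>M)"
proof (induction t)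
  case 0
  then show ?case unfolding add_0_right by simp
next
  case (Suc t)
  have "(\<integral>\<^sup>+\<omega>. (if Gk eps k (\<lambda>i. X i \<omega>) then ennreal (u (Suc (m + t)) \<omega>) else 0) \<partial>M)
      \<le> ennreal (7/8) * (\<integral>\<^sup>+\<omega>. (if Gk eps k (\<lambda>i. X i \<omega>) then ennreal (u (m + t) \<omega>) else 0) \<partial>M)"
  proof (rule step)
    show "Measurable.pred (PiM {1..m + t} (\<lambda>_. borel)) (Gk eps k)" using assms by (intro Gk_pred) simp
    show "Gk eps k (restrict y {1..m + t}) = Gk eps k y" for y using assms by (intro Gk_restrict) simp
    show "(\<integral>\<^sup>+x. ennreal (ufs eps y (m + t) x) \<partial>uniform_measure lborel {-1..1}) \<le> ennreal (7/8 * uf eps y (m + t))"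
      if "Gk eps k y" for y
      using that assms by (intro rate_a Gk_le[of eps k]) auto
  qed simp
  also have "\<dots> \<le> ennreal (7/8) * (ennreal ((7/8)^t) * (\<integral>\<^sup>+\<omega>. (if Gk eps k (\<lambda>i. X i \<omega>) then ennreal (u m \<omega>) else 0) \<partial>M))"
    using Suc.IH by (intro mult_left_mono) auto
  also have "\<dots> = ennreal ((7/8)^Suc t) * (\<integral>\<^sup>+\<omega>. (if Gk eps k (\<lambda>i. X i \<omega>) then ennreal (u m \<omega>) else 0) \<partial>M)"
  proof -
    have "ennreal (7/8) * ennreal ((7/8)^t) = ennreal ((7/8)^Suc t)"
      using ennreal_mult[of "7/8" "(7/8)^t"] by simp
    then show ?thesis by (simp only: mult.assoc[symmetric])
  qed
  finally show ?case unfolding add_Suc_right .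
qed

lemma iterate_tail:
  defines "e \<equiv> min eps 1"
  shows "(\<integral>\<^sup>+\<omega>. ennreal (u m \<omega>) \<partial>M) \<le> ennreal ((1 - e/2)^m)"
proof -
  have e: "0 < e" "e \<le> 1" "e \<le> eps" using eps_pos unfolding e_def by auto
  have "(\<integral>\<^sup>+\<omega>. ennreal (u m \<omega>) \<partial>M) \<le> ennreal ((1 - e/2)^m) * (\<integral>\<^sup>+\<omega>. ennreal (u 0 \<omega>) \<partial>M)"
  proof (induction m)
    case 0
    then show ?case by simp
  next
    case (Suc m)
    have "(\<integral>\<^sup>+\<omega>. (if (\<lambda>_. True) (\<lambda>i. X i \<omega>) then ennreal (u (Suc m) \<omega>) else 0) \<partial>M)
      \<le> ennreal (1 - e/2) * (\<integral>\<^sup>+\<omega>. (if (\<lambda>_. True) (\<lambda>i. X i \<omega>) then ennreal (u m \<omega>) else 0) \<partial>M)"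
      by (rule step) (use e in \<open>auto intro: rate_b\<close>)
    then have "(\<integral>\<^sup>+\<omega>. ennreal (u (Suc m) \<omega>) \<partial>M) \<le> ennreal (1 - e/2) * (\<integral>\<^sup>+\<omega>. ennreal (u m \<omega>) \<partial>M)"
      by simp
    also have "\<dots> \<le> ennreal (1 - e/2) * (ennreal ((1 - e/2)^m) * (\<integral>\<^sup>+\<omega>. ennreal (u 0 \<omega>) \<partial>M))"
      using Suc.IH by (intro mult_left_mono) auto
    also have "\<dots> = ennreal ((1 - e/2)^Suc m) * (\<integral>\<^sup>+\<omega>. ennreal (u 0 \<omega>) \<partial>M)"
      using e by (simp add: ennreal_mult mult.assoc)
    finally show ?case .
  qed
  also have "\<dots> \<le> ennreal ((1 - e/2)^m) * 1"
  proof (intro mult_left_mono)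
    have "(\<integral>\<^sup>+\<omega>. ennreal (u 0 \<omega>) \<partial>M) \<le> (\<integral>\<^sup>+\<omega>. 1 \<partial>M)"
      unfolding u_def by (intro nn_integral_mono) (simp add: uf_le1)
    then show "(\<integral>\<^sup>+\<omega>. ennreal (u 0 \<omega>) \<partial>M) \<le> 1" by (simp add: emeasure_space_1)
  qed simp
  finally show ?thesis by simp
qed

end



context lsetup
begin

lemma pred_G: "Measurable.pred M (\<lambda>\<omega>. Gk eps k (\<lambda>i. X i \<omega>))"
proof -
  have "Measurable.pred M (\<lambda>\<omega>. Gk eps k (Y k \<omega>))"
    using measurable_compose[OF Y_meas Gk_pred[of k k eps]] by simp
  moreover have "Gk eps k (Y k \<omega>) = Gk eps k (\<lambda>i. X i \<omega>)" for \<omega>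
    unfolding Y_def by (rule Gk_restrict) simp
  ultimately show ?thesis by simp
qed

lemma sets_G[measurable]: "{\<omega>\<in>space M. Gk eps k (\<lambda>i. X i \<omega>)} \<in> sets M"
  using pred_G unfolding pred_def .

lemma sets_bad[measurable]: "{\<omega>\<in>space M. Gk eps k (\<lambda>i. X i \<omega>) \<and> c < u n \<omega>} \<in> sets M"
  using pred_G[of k] u_meas[of n] by measurable

lemma sets_good[measurable]: "{\<omega>\<in>space M. Gk eps k (\<lambda>i. X i \<omega>) \<and> u n \<omega> \<le> c} \<in> sets M"
  using pred_G[of k] u_meas[of n] by measurable

lemma int_G_u: "(\<integral>\<^sup>+\<omega>. (if Gk eps k (\<lambda>i. X i \<omega>) then ennreal (u k \<omega>) else 0) \<partial>M)
   \<le> ennreal (1/2) * emeasure M {\<omega>\<in>space M. Gk eps k (\<lambda>i. X i \<omega>)}"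
proof -
  have "(\<integral>\<^sup>+\<omega>. (if Gk eps k (\<lambda>i. X i \<omega>) then ennreal (u k \<omega>) else 0) \<partial>M)
     \<le> (\<integral>\<^sup>+\<omega>. ennreal (1/2) * indicator {\<omega>\<in>space M. Gk eps k (\<lambda>i. X i \<omega>)} \<omega> \<partial>M)"
  proof (intro nn_integral_mono)
    fix \<omega> assume "\<omega> \<in> space M"
    show "(if Gk eps k (\<lambda>i. X i \<omega>) then ennreal (u k \<omega>) else 0) \<le> ennreal (1/2) * indicator {\<omega>\<in>space M. Gk eps k (\<lambda>i. X i \<omega>)} \<omega>"
    proof (cases "Gk eps k (\<lambda>i. X i \<omega>)")
      case True
      then have "u k \<omega> \<le> 1/2" unfolding u_def Gk_def by simp
      then have "ennreal (u k \<omega>) \<le> ennreal (1/2)" by (rule ennreal_leI)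
      then show ?thesis using True \<open>\<omega> \<in> space M\<close> by (simp only: if_True indicator_simps mem_Collect_eq mult_1_right simp_thms)
    qed simp
  qed
  also have "\<dots> = ennreal (1/2) * emeasure M {\<omega>\<in>space M. Gk eps k (\<lambda>i. X i \<omega>)}"
    by (rule nn_integral_cmult_indicator) simp
  finally show ?thesis .
qed

lemma bad_bound:
  "emeasure M {\<omega>\<in>space M. Gk eps k (\<lambda>i. X i \<omega>) \<and> eps/2 < u (k + t) \<omega>}
     \<le> ennreal ((1/eps) * (7/8)^t) * emeasure M {\<omega>\<in>space M. Gk eps k (\<lambda>i. X i \<omega>)}"
proof -
  let ?B = "{\<omega>\<in>space M. Gk eps k (\<lambda>i. X i \<omega>) \<and> eps/2 < u (k + t) \<omega>}"
  let ?E = "{\<omega>\<in>space M. Gk eps k (\<lambda>i. X i \<omega>)}"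
  let ?I = "\<lambda>n. (\<integral>\<^sup>+\<omega>. (if Gk eps k (\<lambda>i. X i \<omega>) then ennreal (u n \<omega>) else 0) \<partial>M)"
  have "emeasure M ?B = (\<integral>\<^sup>+\<omega>. indicator ?B \<omega> \<partial>M)" by (intro nn_integral_indicator[symmetric] sets_bad)
  also have "\<dots> \<le> (\<integral>\<^sup>+\<omega>. ennreal (2/eps) * (if Gk eps k (\<lambda>i. X i \<omega>) then ennreal (u (k + t) \<omega>) else 0) \<partial>M)"
  proof (intro nn_integral_mono)
    fix \<omega>
    show "indicator ?B \<omega> \<le> ennreal (2/eps) * (if Gk eps k (\<lambda>i. X i \<omega>) then ennreal (u (k + t) \<omega>) else 0)"
    proof (cases "\<omega> \<in> ?B")
      case True
      then have "eps/2 < u (k + t) \<omega>" "Gk eps k (\<lambda>i. X i \<omega>)" by auto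
      then have "1 \<le> 2/eps * u (k + t) \<omega>" using eps_pos by (simp add: field_simps)
      then have "ennreal 1 \<le> ennreal (2/eps * u (k + t) \<omega>)" by (rule ennreal_leI)
      also have "\<dots> = ennreal (2/eps) * ennreal (u (k + t) \<omega>)"
        using eps_pos by (intro ennreal_mult) (auto simp: u_def uf_nonneg)
      finally show ?thesis using True by simp
    qed simp
  qed
  also have "\<dots> = ennreal (2/eps) * ?I (k + t)"
  proof (rule nn_integral_cmult)
    show "(\<lambda>\<omega>. if Gk eps k (\<lambda>i. X i \<omega>) then ennreal (u (k + t) \<omega>) else 0) \<in> borel_measurable M"
      using pred_G[of k] u_meas[of "k + t"] by measurable
  qed
  also have "\<dots> \<le> ennreal (2/eps) * (ennreal ((7/8)^t) * ?I k)"
    using iterate_G[of k k t] by (intro mult_left_mono) auto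
  also have "\<dots> \<le> ennreal (2/eps) * (ennreal ((7/8)^t) * (ennreal (1/2) * emeasure M ?E))"
    using int_G_u[of k] by (intro mult_left_mono) auto
  also have "\<dots> = ennreal ((1/eps) * (7/8)^t) * emeasure M ?E"
  proof -
    have e1: "ennreal ((7/8)^t) * ennreal (1/2) = ennreal ((7/8)^t * (1/2))" by (rule ennreal_mult[symmetric]) auto
    have e2: "ennreal (2/eps) * ennreal ((7/8)^t * (1/2)) = ennreal (2/eps * ((7/8)^t * (1/2)))"
      by (rule ennreal_mult[symmetric]) (use eps_pos in auto)
    have e3: "2/eps * ((7/8::real)^t * (1/2)) = (1/eps) * (7/8)^t" by simp
    have "ennreal (2/eps) * (ennreal ((7/8)^t) * (ennreal (1/2) * emeasure M ?E))
        = (ennreal (2/eps) * (ennreal ((7/8)^t) * ennreal (1/2))) * emeasure M ?E" by (simp only: mult.assoc)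
    also have "\<dots> = ennreal ((1/eps) * (7/8)^t) * emeasure M ?E" unfolding e1 e2 e3 ..
    finally show ?thesis .
  qed
  finally show ?thesis .
qed

end






lemma vfrac_gt_iff: "vfrac eps X n \<omega> > 1/2 \<longleftrightarrow> uf eps (\<lambda>i. X i \<omega>) n < 1/2"
  unfolding vfrac_uf by auto

lemma tau1_G:
  assumes "Gk eps k (\<lambda>i. X i \<omega>)"
  shows "tau1 eps X \<omega> = enat k"
proof -
  have k: "vfrac eps X k \<omega> > 1/2" using assms unfolding Gk_def vfrac_gt_iff by simp
  have "(LEAST t. vfrac eps X t \<omega> > 1/2) = k"
  proof (rule Least_equality)
    show "vfrac eps X k \<omega> > 1/2" by (rule k)
    fix y assume "vfrac eps X y \<omega> > 1/2"
    then show "k \<le> y" using assms unfolding Gk_def vfrac_gt_iff by (meson not_le not_less)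
  qed
  then show ?thesis unfolding tau1_def using k by auto
qed

lemma tau1_fin:
  assumes "tau1 eps X \<omega> \<noteq> \<infinity>"
  shows "\<exists>k. Gk eps k (\<lambda>i. X i \<omega>) \<and> tau1 eps X \<omega> = enat k"
proof -
  have ex: "\<exists>t. vfrac eps X t \<omega> > 1/2"
  proof (rule ccontr)
    assume na: "\<not> (\<exists>t. vfrac eps X t \<omega> > 1/2)"
    have "tau1 eps X \<omega> = \<infinity>" unfolding tau1_def using na by (rule if_not_P)
    then show False using assms by simp
  qed
  define k where "k = (LEAST t. vfrac eps X t \<omega> > 1/2)"
  have "vfrac eps X k \<omega> > 1/2" unfolding k_def using ex by (rule LeastI_ex)
  moreover have "\<not> vfrac eps X j \<omega> > 1/2" if "j < k" for j using that unfolding k_def by (rule not_less_Least)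
  ultimately have "Gk eps k (\<lambda>i. X i \<omega>)" unfolding Gk_def vfrac_gt_iff by (simp add: not_less)
  then show ?thesis by (intro exI[of _ k] conjI tau1_G)
qed

lemma wfrac_G: "Gk eps k (\<lambda>i. X i \<omega>) \<Longrightarrow> wfrac eps X s \<omega> = uf eps (\<lambda>i. X i \<omega>) (k + s)"
  unfolding wfrac_def using tau1_G[of eps k X \<omega>] by (simp add: vfrac_uf)

lemma tau2_le_iff:
  "tau2 eps X \<omega> \<le> enat t \<longleftrightarrow> (\<exists>k. Gk eps k (\<lambda>i. X i \<omega>) \<and> uf eps (\<lambda>i. X i \<omega>) (k + t) \<le> eps/2)"
proof
  assume a: "tau2 eps X \<omega> \<le> enat t"
  have c: "tau1 eps X \<omega> \<noteq> \<infinity> \<and> (\<exists>s. wfrac eps X s \<omega> \<le> eps/2)"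
  proof (rule ccontr)
    assume na: "\<not> (tau1 eps X \<omega> \<noteq> \<infinity> \<and> (\<exists>s. wfrac eps X s \<omega> \<le> eps/2))"
    have "tau2 eps X \<omega> = \<infinity>" unfolding tau2_def using na by (rule if_not_P)
    then show False using a by simp
  qed
  obtain k where k: "Gk eps k (\<lambda>i. X i \<omega>)" using tau1_fin[OF conjunct1[OF c]] by (elim exE conjE)
  define s where "s = (LEAST s. wfrac eps X s \<omega> \<le> eps/2)"
  have "tau2 eps X \<omega> = enat s" unfolding tau2_def s_def using c by (rule if_P)
  then have "s \<le> t" using a by simp
  have "wfrac eps X s \<omega> \<le> eps/2" unfolding s_def using conjunct2[OF c] by (rule LeastI_ex)
  then have "uf eps (\<lambda>i. X i \<omega>) (k + s) \<le> eps/2" using wfrac_G[where eps=eps and k=k and X=X and \<omega>=\<omega> and s=s] k by simp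
  moreover have "uf eps (\<lambda>i. X i \<omega>) (k + t) \<le> uf eps (\<lambda>i. X i \<omega>) (k + s)"
    using \<open>s \<le> t\<close> by (intro uf_mono) simp
  ultimately have "uf eps (\<lambda>i. X i \<omega>) (k + t) \<le> eps/2" by linarith
  then show "\<exists>k. Gk eps k (\<lambda>i. X i \<omega>) \<and> uf eps (\<lambda>i. X i \<omega>) (k + t) \<le> eps/2" using k by (intro exI[of _ k] conjI)
next
  assume "\<exists>k. Gk eps k (\<lambda>i. X i \<omega>) \<and> uf eps (\<lambda>i. X i \<omega>) (k + t) \<le> eps/2"
  then obtain k where k: "Gk eps k (\<lambda>i. X i \<omega>)" "uf eps (\<lambda>i. X i \<omega>) (k + t) \<le> eps/2" by (elim exE conjE)
  have w: "wfrac eps X t \<omega> \<le> eps/2" using k(2) wfrac_G[where eps=eps and k=k and X=X and \<omega>=\<omega> and s=t] k(1) by simp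
  have cond: "tau1 eps X \<omega> \<noteq> \<infinity> \<and> (\<exists>s. wfrac eps X s \<omega> \<le> eps/2)"
    using tau1_G[where eps=eps and k=k and X=X and \<omega>=\<omega>] k(1) w by (intro conjI exI[of _ t]) simp_all
  have "tau2 eps X \<omega> = enat (LEAST s. wfrac eps X s \<omega> \<le> eps/2)" unfolding tau2_def using cond by (rule if_P)
  moreover have "(LEAST s. wfrac eps X s \<omega> \<le> eps/2) \<le> t" using w by (rule Least_le)
  ultimately show "tau2 eps X \<omega> \<le> enat t" by simp
qed



context lsetup
begin

lemma tail_prob:
  defines "e \<equiv> min eps 1"
  shows "measure M {\<omega>\<in>space M. 1/2 \<le> u N \<omega>} \<le> 2 * (1 - e/2)^N"
proof -
  let ?A = "{\<omega>\<in>space M. 1/2 \<le> u N \<omega>}"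
  have A: "?A \<in> sets M" using u_meas[of N] by measurable
  have e: "0 < e" "e \<le> 1" using eps_pos unfolding e_def by auto
  have "emeasure M ?A = (\<integral>\<^sup>+\<omega>. indicator ?A \<omega> \<partial>M)" using A by simp
  also have "\<dots> \<le> (\<integral>\<^sup>+\<omega>. ennreal 2 * ennreal (u N \<omega>) \<partial>M)"
  proof (intro nn_integral_mono)
    fix \<omega>
    show "indicator ?A \<omega> \<le> ennreal 2 * ennreal (u N \<omega>)"
    proof (cases "\<omega> \<in> ?A")
      case True
      then have "1 \<le> 2 * u N \<omega>" by simp
      then have "ennreal 1 \<le> ennreal (2 * u N \<omega>)" by (rule ennreal_leI)
      also have "\<dots> = ennreal 2 * ennreal (u N \<omega>)" by (intro ennreal_mult) (auto simp: u_def uf_nonneg)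
      finally show ?thesis using True by simp
    qed simp
  qed
  also have "\<dots> = ennreal 2 * (\<integral>\<^sup>+\<omega>. ennreal (u N \<omega>) \<partial>M)"
    using u_meas[of N] by (intro nn_integral_cmult) measurable
  also have "\<dots> \<le> ennreal 2 * ennreal ((1 - e/2)^N)"
    using iterate_tail[of N] unfolding e_def by (intro mult_left_mono) auto
  also have "\<dots> = ennreal (2 * (1 - e/2)^N)" using e by (intro ennreal_mult[symmetric]) auto
  finally have "ennreal (measure M ?A) \<le> ennreal (2 * (1 - e/2)^N)" by (simp add: emeasure_eq_measure)
  then show ?thesis using e by (subst (asm) ennreal_le_iff) auto
qed

lemma cover: "{\<omega>\<in>space M. u N \<omega> < 1/2} \<subseteq> (\<Union>k\<in>{..N}. {\<omega>\<in>space M. Gk eps k (\<lambda>i. X i \<omega>)})"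
proof
  fix \<omega> assume a: "\<omega> \<in> {\<omega>\<in>space M. u N \<omega> < 1/2}"
  then have ex: "\<exists>j. uf eps (\<lambda>i. X i \<omega>) j < 1/2" unfolding u_def by auto
  define k where "k = (LEAST j. uf eps (\<lambda>i. X i \<omega>) j < 1/2)"
  have k1: "uf eps (\<lambda>i. X i \<omega>) k < 1/2" unfolding k_def using ex by (rule LeastI_ex)
  have k2: "\<not> uf eps (\<lambda>i. X i \<omega>) j < 1/2" if "j < k" for j using that unfolding k_def by (rule not_less_Least)
  have "k \<le> N" unfolding k_def using a unfolding u_def by (intro Least_le) simp
  moreover have "Gk eps k (\<lambda>i. X i \<omega>)" unfolding Gk_def using k1 k2 by (simp add: not_less)
  ultimately show "\<omega> \<in> (\<Union>k\<in>{..N}. {\<omega>\<in>space M. Gk eps k (\<lambda>i. X i \<omega>)})" using a by blast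
qed

lemma T_lower:
  fixes t k :: nat
  defines "c \<equiv> (1/eps) * (7/8)^t"
  shows "(1 - c) * measure M {\<omega>\<in>space M. Gk eps k (\<lambda>i. X i \<omega>)}
     \<le> measure M {\<omega>\<in>space M. Gk eps k (\<lambda>i. X i \<omega>) \<and> u (k + t) \<omega> \<le> eps/2}"
proof -
  let ?E = "{\<omega>\<in>space M. Gk eps k (\<lambda>i. X i \<omega>)}"
  let ?T = "{\<omega>\<in>space M. Gk eps k (\<lambda>i. X i \<omega>) \<and> u (k + t) \<omega> \<le> eps/2}"
  let ?B = "{\<omega>\<in>space M. Gk eps k (\<lambda>i. X i \<omega>) \<and> eps/2 < u (k + t) \<omega>}"
  have c0: "0 \<le> c" unfolding c_def using eps_pos by simp
  have "ennreal (measure M ?B) \<le> ennreal c * ennreal (measure M ?E)"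
    using bad_bound[of k t] unfolding c_def by (simp add: emeasure_eq_measure)
  also have "\<dots> = ennreal (c * measure M ?E)" using c0 by (intro ennreal_mult[symmetric]) auto
  finally have B: "measure M ?B \<le> c * measure M ?E" using c0 by (subst (asm) ennreal_le_iff) auto
  have "?E = ?T \<union> ?B" by auto
  moreover have "?T \<inter> ?B = {}" by auto
  moreover have "measure M (?T \<union> ?B) = measure M ?T + measure M ?B"
    by (rule finite_measure_Union[OF sets_good sets_bad]) auto
  ultimately have "measure M ?E = measure M ?T + measure M ?B" by simp
  then show ?thesis using B by (simp add: algebra_simps)
qed

lemma main:
  shows "measure M {\<omega>\<in>space M. tau2 eps X \<omega> \<le> enat t} \<ge> 1 - (1/eps) * (7/8)^t"
proof (cases "1 \<le> (1/eps) * (7/8)^t")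
  case True
  then show ?thesis by (smt (verit) measure_nonneg)
next
  case False
  define c where "c = (1/eps) * (7/8)^t"
  have c1: "c < 1" using False unfolding c_def by simp
  define e where "e = min eps 1"
  have e: "0 < e" "e \<le> 1" using eps_pos unfolding e_def by auto
  define S where "S = {\<omega>\<in>space M. tau2 eps X \<omega> \<le> enat t}"
  define T where "T = (\<lambda>k. {\<omega>\<in>space M. Gk eps k (\<lambda>i. X i \<omega>) \<and> u (k + t) \<omega> \<le> eps/2})"
  define E where "E = (\<lambda>k. {\<omega>\<in>space M. Gk eps k (\<lambda>i. X i \<omega>)})"
  have S_eq: "S = (\<Union>k. T k)"
  proof (rule set_eqI)
    fix \<omega>
    show "\<omega> \<in> S \<longleftrightarrow> \<omega> \<in> (\<Union>k. T k)"
      unfolding S_def T_def u_def using tau2_le_iff[where eps=eps and X=X and \<omega>=\<omega> and t=t] by blast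
  qed
  have T_sets: "T k \<in> sets M" for k unfolding T_def by (rule sets_good)
  have E_sets: "E k \<in> sets M" for k unfolding E_def by (rule sets_G)
  have S_sets: "S \<in> sets M" unfolding S_eq using T_sets by auto
  have dT: "disjoint_family_on T A" for A
    unfolding disjoint_family_on_def T_def using Gk_disj by blast
  have dE: "disjoint_family_on E A" for A
    unfolding disjoint_family_on_def E_def using Gk_disj by blast
  have bound: "(1 - c) * (1 - 2 * (1 - e/2)^N) \<le> measure M S" for N
  proof -
    have "(1 - c) * (1 - 2 * (1 - e/2)^N) \<le> (1 - c) * measure M {\<omega>\<in>space M. u N \<omega> < 1/2}"
    proof (intro mult_left_mono)
      have "{\<omega>\<in>space M. u N \<omega> < 1/2} = space M - {\<omega>\<in>space M. 1/2 \<le> u N \<omega>}" by auto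
      moreover have "{\<omega>\<in>space M. 1/2 \<le> u N \<omega>} \<in> sets M" using u_meas[of N] by measurable
      ultimately have "measure M {\<omega>\<in>space M. u N \<omega> < 1/2} = 1 - measure M {\<omega>\<in>space M. 1/2 \<le> u N \<omega>}"
        by (simp add: prob_compl)
      then show "1 - 2 * (1 - e/2)^N \<le> measure M {\<omega>\<in>space M. u N \<omega> < 1/2}"
        using tail_prob[of N] unfolding e_def by simp
    qed (use c1 in simp)
    also have "\<dots> \<le> (1 - c) * measure M (\<Union>k\<in>{..N}. E k)"
      using cover[of N] E_sets unfolding E_def by (intro mult_left_mono finite_measure_mono) (auto simp: c1 less_imp_le)
    also have "\<dots> = (1 - c) * (\<Sum>k\<in>{..N}. measure M (E k))"
      using E_sets dE by (subst finite_measure_finite_Union) auto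
    also have "\<dots> = (\<Sum>k\<in>{..N}. (1 - c) * measure M (E k))" by (simp add: sum_distrib_left)
    also have "\<dots> \<le> (\<Sum>k\<in>{..N}. measure M (T k))"
      unfolding E_def T_def c_def by (intro sum_mono T_lower)
    also have "\<dots> = measure M (\<Union>k\<in>{..N}. T k)"
      using T_sets dT by (subst finite_measure_finite_Union) auto
    also have "\<dots> \<le> measure M S"
      using T_sets S_sets unfolding S_eq by (intro finite_measure_mono) auto
    finally show ?thesis .
  qed
  have lim: "(\<lambda>N. (1 - c) * (1 - 2 * (1 - e/2)^N)) \<longlonglongrightarrow> (1 - c) * (1 - 2 * 0)"
    using e by (intro tendsto_intros LIMSEQ_power_zero) auto
  have "1 - c \<le> measure M S"
    using lim bound by (intro LIMSEQ_le_const2[of _ "1 - c"]) auto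
  then show ?thesis unfolding S_def c_def by simp
qed

end


theorem lemma6:
  fixes M :: "'a measure" and X :: "nat \<Rightarrow> 'a \<Rightarrow> real" and eps :: real and t :: nat
  assumes "prob_space M"
    and "prob_space.indep_vars M (\<lambda>_. borel) X {1..}"
    and "\<And>i. i \<ge> 1 \<Longrightarrow> distr M borel (X i) = uniform_measure lborel {-1..1}"
    and "eps > 0"
    and "t > 0"
  shows "measure M {\<omega> \<in> space M. tau2 eps X \<omega> \<le> enat t} \<ge> 1 - (1/eps) * (7/8)^t"
proof -
  have "lsetup M X eps"
    unfolding lsetup_def lsetup_axioms_def using assms by auto
  then interpret lsetup M X eps .
  show ?thesis by (rule main)
qed

end
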